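(* Let $n\ge 2$ and $1\le k\le n-1$ be integers, $\lambda>0$, $s\ge 0$, and $t\in\{1,\dots,n\}$. Let $X_1,\dots,X_n$ be independent random variables each with the shifted-exponential distribution $\mathrm{Shifted\text{-}Exp}(\lambda,s)$, i.e. with CDF $F(y)=1-e^{-\lambda(y-s)}$ for $y\ge s$ and $F(y)=0$ for $y<s$. Let $Y_{t,1}=X_t$ and $$Y_{t,2}=\min\Big(X_t,\ \max\big(\mathrm{mink}(\{X_i\}_{i\neq t})\big)\Big),$$ where $\max(\mathrm{mink}(\{X_i\}_{i\neq t}))$ denotes the $k$-th smallest of the $n-1$ values $X_i$, $i\ne t$. Then $$\Gamma_{SE}:=\frac{E[Y_{t,1}]-E[Y_{t,2}]}{E[Y_{t,1}]}=\frac{1}{s\lambda+1}\cdot\frac{n-k}{n}.$$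
   Context: In an $(n,k,m)$ systematic MDS array code stored on $n$ nodes (any $k$ nodes recover all data), $X_i$ is the access latency of node $i$; $Y_{t,1}$ is the latency of directly accessing node $t$ (DA method) and $Y_{t,2}$ is the latency of the proposed accelerated access algorithms (AAKL/AAUL). $\Gamma_{SE}$ is the relative reduction in expected latency. *)

theory Defs
  imports "HOL-Probability.Probability" "HOL-Library.Multiset"
begin

definition shifted_exp_cdf :: "real \<Rightarrow> real \<Rightarrow> real \<Rightarrow> real" where
  "shifted_exp_cdf l s y = (if y < s then 0 else 1 - exp (- l * (y - s)))"

definition kth_smallest :: "nat \<Rightarrow> real multiset \<Rightarrow> real" where
  "kth_smallest k A = sorted_list_of_multiset A ! (k - 1)"

definition Y2 :: "nat \<Rightarrow> nat \<Rightarrow> nat \<Rightarrow> (nat \<Rightarrow> 'a \<Rightarrow> real) \<Rightarrow> 'a \<Rightarrow> real" where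
  "Y2 n k t X \<omega> = min (X t \<omega>) (kth_smallest k (image_mset (\<lambda>i. X i \<omega>) (mset_set ({1..n} - {t}))))"

end

theory Submission
  imports Defs "HOL-Real_Asymp.Real_Asymp"
begin


lemma derivB:
  fixes p :: real
  assumes "j \<le> m"
  shows "((\<lambda>p. \<Sum>i\<le>j. of_nat (Suc m choose i) * p^i * (1-p)^(Suc m - i)) has_real_derivative
          (- (of_nat (Suc m) * of_nat (m choose j) * p^j * (1-p)^(m-j)))) (at p)"
  using assms
proof (induction j)
  case 0
  show ?case
  proof -
    have "((\<lambda>p. (1-p)^Suc m) has_real_derivative (of_nat (Suc m) * ((0 - 1) * (1-p)^(Suc m - Suc 0)))) (at p)"
      by (intro derivative_intros)
    then show ?thesis by simp
  qed
next
  case (Suc j)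
  obtain d where d: "m - j = Suc d" using Suc.prems by (metis Suc_diff_le Suc_le_D diff_Suc_Suc)
  have e1: "Suc m - Suc j = Suc d" "m - Suc j = d" using d by auto
  have c1: "real (Suc m choose Suc j) * real (Suc j) = real (Suc m) * real (m choose j)"
    by (metis Suc_times_binomial of_nat_mult mult.commute)
  have c2: "real (Suc m choose Suc j) * real (Suc d) = real (Suc m) * real (m choose Suc j)"
  proof -
    have "(Suc m - Suc j) * (Suc m choose Suc j) = Suc m * ((Suc m - 1) choose Suc j)"
      by (rule binomial_absorb_comp)
    then show ?thesis using e1 by (metis diff_Suc_1 mult.commute of_nat_mult)
  qed
  have IH: "((\<lambda>p. \<Sum>i\<le>j. of_nat (Suc m choose i) * p^i * (1-p)^(Suc m - i)) has_real_derivative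
          (- (of_nat (Suc m) * of_nat (m choose j) * p^j * (1-p)^(Suc d)))) (at p)"
    using Suc d by auto
  have D1: "((\<lambda>p. p^Suc j) has_real_derivative real (Suc j) * p^j) (at p)"
    using DERIV_pow[of "Suc j" p UNIV] by simp
  have D2: "((\<lambda>p. (1-p)^Suc d) has_real_derivative (of_nat (Suc d) * ((0 - 1) * (1-p)^(Suc d - Suc 0)))) (at p)"
    by (intro DERIV_power DERIV_diff DERIV_const DERIV_ident)
  have T0: "((\<lambda>p. of_nat (Suc m choose Suc j) * (p^Suc j * (1-p)^(Suc d))) has_real_derivative
     of_nat (Suc m choose Suc j) * (p^Suc j * (of_nat (Suc d) * ((0 - 1) * (1-p)^(Suc d - Suc 0))) + real (Suc j) * p^j * (1-p)^Suc d)) (at p)"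
    by (intro DERIV_cmult DERIV_mult' D1 D2)
  have T: "((\<lambda>p. of_nat (Suc m choose Suc j) * p^Suc j * (1-p)^(Suc d)) has_real_derivative
     (of_nat (Suc m choose Suc j) * (real (Suc j) * p^j * (1-p)^(Suc d) - real (Suc d) * p^Suc j * (1-p)^d))) (at p)"
    using T0 by (simp add: algebra_simps)
  have "((\<lambda>p. (\<Sum>i\<le>j. of_nat (Suc m choose i) * p^i * (1-p)^(Suc m - i)) + of_nat (Suc m choose Suc j) * p^Suc j * (1-p)^(Suc d)) has_real_derivative
     (- (of_nat (Suc m) * of_nat (m choose j) * p^j * (1-p)^(Suc d))) + of_nat (Suc m choose Suc j) * (real (Suc j) * p^j * (1-p)^(Suc d) - real (Suc d) * p^Suc j * (1-p)^d)) (at p)"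
    by (rule DERIV_add[OF IH T])
  moreover have "(- (of_nat (Suc m) * of_nat (m choose j) * p^j * (1-p)^(Suc d))) + of_nat (Suc m choose Suc j) * (real (Suc j) * p^j * (1-p)^(Suc d) - real (Suc d) * p^Suc j * (1-p)^d)
     = - (of_nat (Suc m) * of_nat (m choose Suc j) * p^Suc j * (1-p)^d)"
  proof -
    have "of_nat (Suc m choose Suc j) * (real (Suc j) * p^j * (1-p)^(Suc d) - real (Suc d) * p^Suc j * (1-p)^d)
        = (real (Suc m choose Suc j) * real (Suc j)) * p^j * (1-p)^(Suc d) - (real (Suc m choose Suc j) * real (Suc d)) * p^Suc j * (1-p)^d"
      by (simp add: algebra_simps)
    also have "\<dots> = real (Suc m) * real (m choose j) * p^j * (1-p)^(Suc d) - real (Suc m) * real (m choose Suc j) * p^Suc j * (1-p)^d"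
      by (simp only: c1 c2)
    finally show ?thesis by simp
  qed
  ultimately show ?case using e1 by simp
qed

definition Bsum :: "nat \<Rightarrow> nat \<Rightarrow> real \<Rightarrow> real" where
  "Bsum m j p = (\<Sum>i\<le>j. of_nat (Suc m choose i) * p^i * (1-p)^(Suc m - i))"

lemma tail_integral:
  fixes l s :: real
  assumes l: "l > 0" and k: "k \<le> Suc m"
  shows "(\<integral>\<^sup>+y. ennreal (exp (-l*(y-s)) * (\<Sum>j<k. real (m choose j) * (1 - exp (-l*(y-s)))^j * exp (-l*(y-s))^(m-j))) * indicator {s..} y \<partial>lborel)
     = ennreal (real k / (l * real (Suc m)))"
proof -
  define E where "E y = exp (-l*(y-s))" for y
  define F where "F y = -(1/(l * real (Suc m))) * (\<Sum>j<k. Bsum m j (1 - E y))" for y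
  have dE: "(E has_real_derivative (- l * E y)) (at y)" for y
    unfolding E_def by (auto intro!: derivative_eq_intros)
  have dB: "((\<lambda>y. Bsum m j (1 - E y)) has_real_derivative
      (- (of_nat (Suc m) * of_nat (m choose j) * (1 - E y)^j * (1-(1 - E y))^(m-j))) * (0 - - l * E y)) (at y)"
    if "j \<le> m" for j y
    unfolding Bsum_def
    by (rule DERIV_chain2[OF derivB[OF that]]) (intro DERIV_diff DERIV_const dE)
  have dF: "(F has_real_derivative (E y * (\<Sum>j<k. real (m choose j) * (1 - E y)^j * E y^(m-j)))) (at y)" for y
  proof -
    have "(F has_real_derivative -(1/(l * real (Suc m))) * (\<Sum>j<k. (- (of_nat (Suc m) * of_nat (m choose j) * (1 - E y)^j * (1-(1 - E y))^(m-j))) * (0 - - l * E y))) (at y)"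
      unfolding F_def
      by (intro DERIV_cmult DERIV_sum dB) (use k in auto)
    moreover have "-(1/(l * real (Suc m))) * (\<Sum>j<k. (- (of_nat (Suc m) * of_nat (m choose j) * (1 - E y)^j * (1-(1 - E y))^(m-j))) * (0 - - l * E y))
       = E y * (\<Sum>j<k. real (m choose j) * (1 - E y)^j * E y^(m-j))"
      unfolding sum_distrib_left
    proof (intro sum.cong refl)
      fix j assume "j \<in> {..<k}"
      have "l * real (Suc m) \<noteq> 0" using l by simp
      then show "-(1/(l * real (Suc m))) * ((- (of_nat (Suc m) * of_nat (m choose j) * (1 - E y)^j * (1-(1 - E y))^(m-j))) * (0 - - l * E y))
         = E y * (real (m choose j) * (1 - E y)^j * E y^(m-j))"
        by (simp add: field_simps)
    qed
    ultimately show ?thesis by simp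
  qed
  have Elim: "(E \<longlongrightarrow> 0) at_top"
    unfolding E_def
    by (rule filterlim_compose[OF exp_at_bot]) (use l in real_asymp)
  have "(F \<longlongrightarrow> -(1/(l * real (Suc m))) * (\<Sum>j<k. Bsum m j (1 - 0))) at_top"
    unfolding F_def Bsum_def by (intro tendsto_intros Elim)
  moreover have "Bsum m j 1 = 0" if "j < k" for j
    unfolding Bsum_def using that k by (intro sum.neutral) auto
  ultimately have Flim: "(F \<longlongrightarrow> 0) at_top" by simp
  have B0: "Bsum m j 0 = 1" for j
    unfolding Bsum_def by (subst sum.atMost_shift) auto
  have "E s = 1" unfolding E_def by simp
  then have Fs: "F s = - (real k / (l * real (Suc m)))"
    unfolding F_def by (simp add: B0)
  have nonneg: "0 \<le> E y * (\<Sum>j<k. real (m choose j) * (1 - E y)^j * E y^(m-j))" if "s \<le> y" for y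
  proof -
    have "E y \<le> 1" unfolding E_def using l that by (simp add: mult_nonneg_nonneg)
    moreover have "E y > 0" unfolding E_def by simp
    ultimately show ?thesis by (intro mult_nonneg_nonneg sum_nonneg) auto
  qed
  have "(\<integral>\<^sup>+y. ennreal (E y * (\<Sum>j<k. real (m choose j) * (1 - E y)^j * E y^(m-j))) * indicator {s..} y \<partial>lborel) = 0 - F s"
    by (rule nn_integral_FTC_atLeast[OF _ dF nonneg Flim]) (unfold E_def, measurable)
  then show ?thesis unfolding E_def Fs by simp
qed



lemma kth_gt:
  fixes A :: "real multiset"
  assumes "1 \<le> k" "k \<le> size A"
  shows "y < kth_smallest k A \<longleftrightarrow> size (filter_mset (\<lambda>x. x \<le> y) A) < k"
proof -
  define xs where "xs = sorted_list_of_multiset A"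
  have srt: "sorted xs" unfolding xs_def by simp
  have A: "A = mset xs" unfolding xs_def by simp
  have len: "length xs = size A" unfolding A by simp
  have cnt: "size (filter_mset (\<lambda>x. x \<le> y) A) = card {i. i < length xs \<and> xs!i \<le> y}"
    unfolding A by (simp add: mset_filter[symmetric] length_filter_conv_card del: mset_filter)
  have kk: "kth_smallest k A = xs ! (k-1)" unfolding kth_smallest_def xs_def ..
  show ?thesis
  proof
    assume "y < kth_smallest k A"
    then have y: "y < xs!(k-1)" by (simp add: kk)
    have "{i. i < length xs \<and> xs!i \<le> y} \<subseteq> {..<k-1}"
    proof
      fix i assume i: "i \<in> {i. i < length xs \<and> xs!i \<le> y}"
      show "i \<in> {..<k-1}"
      proof (rule ccontr)
        assume "i \<notin> {..<k-1}"
        then have "xs!(k-1) \<le> xs!i" using i srt by (intro sorted_nth_mono) auto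
        then show False using i y by auto
      qed
    qed
    then have "card {i. i < length xs \<and> xs!i \<le> y} \<le> k - 1"
      by (metis card_lessThan card_mono finite_lessThan)
    then show "size (filter_mset (\<lambda>x. x \<le> y) A) < k" using cnt assms by linarith
  next
    assume c: "size (filter_mset (\<lambda>x. x \<le> y) A) < k"
    show "y < kth_smallest k A"
    proof (rule ccontr)
      assume "\<not> y < kth_smallest k A"
      then have y: "xs!(k-1) \<le> y" by (simp add: kk)
      have "{..<k} \<subseteq> {i. i < length xs \<and> xs!i \<le> y}"
      proof
        fix i assume "i \<in> {..<k}"
        then have "i \<le> k - 1" "k - 1 < length xs" using assms len by auto
        then have "xs!i \<le> xs!(k-1)" using srt by (intro sorted_nth_mono) auto
        then show "i \<in> {i. i < length xs \<and> xs!i \<le> y}" using y \<open>i \<le> k-1\<close> \<open>k-1 < length xs\<close> by auto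
      qed
      then have "k \<le> card {i. i < length xs \<and> xs!i \<le> y}"
        by (metis card_lessThan card_mono finite_Collect_conjI finite_Collect_less_nat)
      then show False using c cnt by linarith
    qed
  qed
qed

lemma Y2_gt:
  assumes "1 \<le> k" "k \<le> n - 1" "t \<in> {1..n}"
  shows "y < Y2 n k t X \<omega> \<longleftrightarrow> y < X t \<omega> \<and> card {i \<in> {1..n} - {t}. X i \<omega> \<le> y} < k"
proof -
  have cS: "card ({1..n} - {t}) = n - 1" using assms by simp
  have "size (filter_mset (\<lambda>x. x \<le> y) (image_mset (\<lambda>i. X i \<omega>) (mset_set ({1..n} - {t}))))
      = card {i \<in> {1..n} - {t}. X i \<omega> \<le> y}"
    by (simp add: filter_mset_image_mset)
  moreover have "k \<le> size (image_mset (\<lambda>i. X i \<omega>) (mset_set ({1..n} - {t})))"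
    using cS assms by simp
  ultimately show ?thesis
    unfolding Y2_def using kth_gt[OF assms(1)] by simp
qed

context prob_space
begin

lemma nn_tail:
  assumes [measurable]: "Y \<in> borel_measurable M"
  shows "(\<integral>\<^sup>+\<omega>. ennreal (Y \<omega>) \<partial>M) = (\<integral>\<^sup>+y. emeasure M {\<omega>\<in>space M. y < Y \<omega>} * indicator {0..} y \<partial>lborel)"
proof -
  interpret P: pair_sigma_finite M lborel ..
  have 1: "ennreal (Y \<omega>) = (\<integral>\<^sup>+y. of_bool (0 \<le> y \<and> y < Y \<omega>) \<partial>lborel)" for \<omega>
  proof (cases "0 \<le> Y \<omega>")
    case True
    have "(\<integral>\<^sup>+y. of_bool (0 \<le> y \<and> y < Y \<omega>) \<partial>lborel) = (\<integral>\<^sup>+y. indicator {0..<Y \<omega>} y \<partial>lborel)"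
      by (intro nn_integral_cong) (auto simp: indicator_def)
    also have "\<dots> = ennreal (Y \<omega>)" using True by simp
    finally show ?thesis ..
  next
    case False
    then have "(\<lambda>y. of_bool (0 \<le> y \<and> y < Y \<omega>) :: ennreal) = (\<lambda>y. 0)" by (auto intro!: ext)
    then show ?thesis using False by (simp add: ennreal_neg)
  qed
  have "(\<integral>\<^sup>+\<omega>. ennreal (Y \<omega>) \<partial>M) = (\<integral>\<^sup>+\<omega>. \<integral>\<^sup>+y. of_bool (0 \<le> y \<and> y < Y \<omega>) \<partial>lborel \<partial>M)"
    by (simp add: 1)
  also have "\<dots> = (\<integral>\<^sup>+y. \<integral>\<^sup>+\<omega>. of_bool (0 \<le> y \<and> y < Y \<omega>) \<partial>M \<partial>lborel)"
    by (rule P.Fubini'[symmetric]) measurable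
  also have "\<dots> = (\<integral>\<^sup>+y. emeasure M {\<omega>\<in>space M. y < Y \<omega>} * indicator {0..} y \<partial>lborel)"
  proof (intro nn_integral_cong)
    fix y :: real
    have "(\<integral>\<^sup>+\<omega>. of_bool (0 \<le> y \<and> y < Y \<omega>) \<partial>M) = (\<integral>\<^sup>+\<omega>. indicator {\<omega>\<in>space M. y < Y \<omega>} \<omega> * indicator {0..} y \<partial>M)"
      by (intro nn_integral_cong) (auto simp: indicator_def)
    also have "\<dots> = emeasure M {\<omega>\<in>space M. y < Y \<omega>} * indicator {0..} y"
      by (subst nn_integral_multc) auto
    finally show "(\<integral>\<^sup>+\<omega>. of_bool (0 \<le> y \<and> y < Y \<omega>) \<partial>M) = emeasure M {\<omega>\<in>space M. y < Y \<omega>} * indicator {0..} y" .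
  qed
  finally show ?thesis .
qed

end

definition Gfun :: "real \<Rightarrow> real \<Rightarrow> nat \<Rightarrow> nat \<Rightarrow> real \<Rightarrow> real" where
  "Gfun l s m k y = (if y < s then 1 else exp (-l*(y-s)) * (\<Sum>j<k. real (m choose j) * (1 - exp (-l*(y-s)))^j * exp (-l*(y-s))^(m-j)))"

lemma Gfun_integral:
  assumes l: "l > 0" and s: "s \<ge> 0" and k: "k \<le> Suc m"
  shows "(\<integral>\<^sup>+y. ennreal (Gfun l s m k y) * indicator {0..} y \<partial>lborel) = ennreal (s + real k / (l * real (Suc m)))"
proof -
  have "(\<integral>\<^sup>+y. ennreal (Gfun l s m k y) * indicator {0..} y \<partial>lborel)
     = (\<integral>\<^sup>+y. indicator {0..<s} y + ennreal (exp (-l*(y-s)) * (\<Sum>j<k. real (m choose j) * (1 - exp (-l*(y-s)))^j * exp (-l*(y-s))^(m-j))) * indicator {s..} y \<partial>lborel)"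
    using s by (intro nn_integral_cong) (auto simp: Gfun_def indicator_def)
  also have "\<dots> = (\<integral>\<^sup>+y. indicator {0..<s} y \<partial>lborel) + (\<integral>\<^sup>+y. ennreal (exp (-l*(y-s)) * (\<Sum>j<k. real (m choose j) * (1 - exp (-l*(y-s)))^j * exp (-l*(y-s))^(m-j))) * indicator {s..} y \<partial>lborel)"
    by (rule nn_integral_add) auto
  also have "\<dots> = ennreal s + ennreal (real k / (l * real (Suc m)))"
    by (subst tail_integral[OF l k]) (use s in simp)
  also have "\<dots> = ennreal (s + real k / (l * real (Suc m)))"
    using s l by (simp add: ennreal_plus)
  finally show ?thesis .
qed



locale cor7 = prob_space +
  fixes X :: "nat \<Rightarrow> 'a \<Rightarrow> real" and n k t :: nat and l s :: real
  assumes n2: "n \<ge> 2" and k1: "1 \<le> k" and kn: "k \<le> n - 1"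
    and l0: "l > 0" and s0: "s \<ge> 0" and tn: "t \<in> {1..n}"
    and indep: "indep_vars (\<lambda>_. borel) X {1..n}"
    and cdf: "\<And>i y. i \<in> {1..n} \<Longrightarrow> measure M {\<omega> \<in> space M. X i \<omega> \<le> y} = shifted_exp_cdf l s y"
begin

abbreviation "F \<equiv> shifted_exp_cdf l s"

lemma rv[measurable]: "i \<in> {1..n} \<Longrightarrow> X i \<in> borel_measurable M"
  using indep unfolding indep_vars_def2 by auto

lemma prob_gt: "i \<in> {1..n} \<Longrightarrow> prob {\<omega> \<in> space M. y < X i \<omega>} = 1 - F y"
proof -
  assume i: "i \<in> {1..n}"
  have "{\<omega> \<in> space M. y < X i \<omega>} = space M - {\<omega> \<in> space M. X i \<omega> \<le> y}" by auto
  moreover have "{\<omega> \<in> space M. X i \<omega> \<le> y} \<in> events" using i by measurable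
  ultimately show ?thesis using prob_compl cdf[OF i] by simp
qed

lemma indep_prod:
  assumes A: "\<And>i. i \<in> {1..n} \<Longrightarrow> A i \<in> sets borel"
  shows "prob (\<Inter>i\<in>{1..n}. X i -` A i \<inter> space M) = (\<Prod>i\<in>{1..n}. prob (X i -` A i \<inter> space M))"
proof -
  have I: "indep_sets (\<lambda>i. { X i -` A \<inter> space M | A. A \<in> sets borel}) {1..n}"
    using indep unfolding indep_vars_def2 by auto
  have ne: "{1..n} \<noteq> {}" using n2 by auto
  have "(\<lambda>i. X i -` A i \<inter> space M) \<in> Pi {1..n} (\<lambda>i. { X i -` A \<inter> space M | A. A \<in> sets borel})"
    using A by auto
  then show ?thesis using I ne unfolding indep_sets_def by blast
qed

definition Aset :: "real \<Rightarrow> nat set \<Rightarrow> nat \<Rightarrow> 'a set" where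
  "Aset y J i = (if i \<in> J then {\<omega> \<in> space M. X i \<omega> \<le> y} else {\<omega> \<in> space M. y < X i \<omega>})"

definition Eset :: "real \<Rightarrow> nat set \<Rightarrow> 'a set" where
  "Eset y J = (\<Inter>i\<in>{1..n}. Aset y J i)"

abbreviation "S \<equiv> {1..n} - {t}"

definition JJ :: "nat set set" where "JJ = {J. J \<subseteq> S \<and> card J < k}"

lemma Aset_sets: "i \<in> {1..n} \<Longrightarrow> Aset y J i \<in> events"
  unfolding Aset_def by auto

lemma Eset_sets: "Eset y J \<in> events"
  unfolding Eset_def using n2 by (intro sets.finite_INT Aset_sets) auto

lemma Eset_prob:
  assumes "J \<subseteq> S"
  shows "prob (Eset y J) = F y ^ card J * (1 - F y) ^ (n - card J)"
proof -
  define B where "B i = (if i \<in> J then {..y} else {y<..})" for i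
  have AB: "Aset y J i = X i -` B i \<inter> space M" for i
    unfolding Aset_def B_def by auto
  have "prob (Eset y J) = (\<Prod>i\<in>{1..n}. prob (Aset y J i))"
    unfolding Eset_def AB by (rule indep_prod) (auto simp: B_def)
  also have "\<dots> = (\<Prod>i\<in>{1..n}. if i \<in> J then F y else 1 - F y)"
    by (intro prod.cong refl) (auto simp: Aset_def cdf prob_gt)
  also have "\<dots> = F y ^ card ({1..n} \<inter> J) * (1 - F y) ^ card ({1..n} - J)"
    by (simp add: prod.If_cases Diff_eq)
  also have "card ({1..n} \<inter> J) = card J" using assms by (metis Diff_subset inf.absorb_iff2 subset_trans)
  also have "card ({1..n} - J) = n - card J"
    using assms by (subst card_Diff_subset) (auto intro: finite_subset)
  finally show ?thesis .
qed

lemma finite_JJ: "finite JJ"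
  unfolding JJ_def by (rule finite_subset[of _ "Pow S"]) auto

lemma Y2_event: "{\<omega> \<in> space M. y < Y2 n k t X \<omega>} = (\<Union>J\<in>JJ. Eset y J)"
proof (intro equalityI subsetI)
  fix \<omega> assume w: "\<omega> \<in> {\<omega> \<in> space M. y < Y2 n k t X \<omega>}"
  then have sp: "\<omega> \<in> space M" and c: "y < X t \<omega>" "card {i \<in> S. X i \<omega> \<le> y} < k"
    using Y2_gt[OF k1 kn tn, of y X \<omega>] by auto
  define J where "J = {i \<in> S. X i \<omega> \<le> y}"
  have "J \<in> JJ" using c unfolding JJ_def J_def by auto
  moreover have "\<omega> \<in> Eset y J"
    unfolding Eset_def Aset_def J_def using sp c by auto
  ultimately show "\<omega> \<in> (\<Union>J\<in>JJ. Eset y J)" by blast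
next
  fix \<omega> assume "\<omega> \<in> (\<Union>J\<in>JJ. Eset y J)"
  then obtain J where J: "J \<in> JJ" and w: "\<omega> \<in> Eset y J" by blast
  have tJ: "t \<notin> J" using J unfolding JJ_def by auto
  have memA: "\<And>i. i \<in> {1..n} \<Longrightarrow> \<omega> \<in> Aset y J i" using w unfolding Eset_def by auto
  have wt: "\<omega> \<in> Aset y J t" using memA tn by auto
  then have sp: "\<omega> \<in> space M" unfolding Aset_def by (auto split: if_splits)
  have xt: "y < X t \<omega>" using wt tJ unfolding Aset_def by auto
  have "{i \<in> S. X i \<omega> \<le> y} = J"
  proof (intro equalityI subsetI)
    fix i assume "i \<in> {i \<in> S. X i \<omega> \<le> y}"
    then have "\<omega> \<in> Aset y J i" "X i \<omega> \<le> y" using memA by auto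
    then show "i \<in> J" unfolding Aset_def by (auto split: if_splits)
  next
    fix i assume i: "i \<in> J"
    then have "i \<in> S" using J unfolding JJ_def by auto
    then have "\<omega> \<in> Aset y J i" using memA by auto
    then show "i \<in> {i \<in> S. X i \<omega> \<le> y}" using i \<open>i \<in> S\<close> unfolding Aset_def by auto
  qed
  then have "card {i \<in> S. X i \<omega> \<le> y} < k" using J unfolding JJ_def by auto
  then show "\<omega> \<in> {\<omega> \<in> space M. y < Y2 n k t X \<omega>}"
    using Y2_gt[OF k1 kn tn, of y X \<omega>] sp xt by auto
qed

lemma Y2_meas[measurable]: "Y2 n k t X \<in> borel_measurable M"
  unfolding borel_measurable_iff_greater Y2_event
  using finite_JJ Eset_sets by auto

lemma Eset_disj: "disjoint_family_on (Eset y) JJ"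
  unfolding disjoint_family_on_def
proof (intro ballI impI)
  fix J J' assume J: "J \<in> JJ" "J' \<in> JJ" "J \<noteq> J'"
  then obtain i where i: "i \<in> J \<and> i \<notin> J' \<or> i \<notin> J \<and> i \<in> J'" by blast
  then have "i \<in> {1..n}" using J unfolding JJ_def by auto
  show "Eset y J \<inter> Eset y J' = {}"
  proof (rule ccontr)
    assume "Eset y J \<inter> Eset y J' \<noteq> {}"
    then obtain \<omega> where "\<omega> \<in> Eset y J" "\<omega> \<in> Eset y J'" by blast
    then have "\<omega> \<in> Aset y J i" "\<omega> \<in> Aset y J' i" using \<open>i \<in> {1..n}\<close> unfolding Eset_def by auto
    then show False using i unfolding Aset_def by (auto split: if_splits)
  qed
qed

lemma sum_JJ: "(\<Sum>J\<in>JJ. g (card J)) = (\<Sum>j<k. real ((n-1) choose j) * g j)"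
proof -
  have JJ: "JJ = (\<Union>j\<in>{..<k}. {J. J \<subseteq> S \<and> card J = j})" unfolding JJ_def by auto
  have cS: "card S = n - 1" using tn by simp
  have "(\<Sum>J\<in>JJ. g (card J)) = (\<Sum>j<k. \<Sum>J\<in>{J. J \<subseteq> S \<and> card J = j}. g (card J))"
    unfolding JJ by (rule sum.UNION_disjoint) auto
  also have "\<dots> = (\<Sum>j<k. \<Sum>J\<in>{J. J \<subseteq> S \<and> card J = j}. g j)"
    by (intro sum.cong refl) auto
  also have "\<dots> = (\<Sum>j<k. real ((n-1) choose j) * g j)"
    using n_subsets[of S] cS by simp
  finally show ?thesis .
qed

lemma prob_Y2_gt: "prob {\<omega> \<in> space M. y < Y2 n k t X \<omega>} = (\<Sum>j<k. real ((n-1) choose j) * (F y ^ j * (1 - F y) ^ (n - j)))"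
proof -
  have "prob {\<omega> \<in> space M. y < Y2 n k t X \<omega>} = (\<Sum>J\<in>JJ. prob (Eset y J))"
    unfolding Y2_event using finite_JJ Eset_sets Eset_disj
    by (intro finite_measure_finite_Union) auto
  also have "\<dots> = (\<Sum>J\<in>JJ. F y ^ card J * (1 - F y) ^ (n - card J))"
    by (intro sum.cong refl Eset_prob) (auto simp: JJ_def)
  also have "\<dots> = (\<Sum>j<k. real ((n-1) choose j) * (F y ^ j * (1 - F y) ^ (n - j)))"
    by (rule sum_JJ)
  finally show ?thesis .
qed

end


context cor7 begin

lemma X_pos: "i \<in> {1..n} \<Longrightarrow> AE \<omega> in M. 0 < X i \<omega>"
proof -
  assume i: "i \<in> {1..n}"
  have F0: "F 0 = 0" using s0 by (auto simp: shifted_exp_cdf_def)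
  have ev: "{\<omega> \<in> space M. X i \<omega> \<le> 0} \<in> events" using i by measurable
  have "emeasure M {\<omega> \<in> space M. X i \<omega> \<le> 0} = 0"
    using cdf[OF i, of 0] F0 by (simp add: emeasure_eq_measure)
  then have "{\<omega> \<in> space M. X i \<omega> \<le> 0} \<in> null_sets M" using ev by (auto intro: null_setsI)
  then show ?thesis by (rule AE_I') auto
qed

lemma Y2_nonneg: "AE \<omega> in M. 0 \<le> Y2 n k t X \<omega>"
proof -
  have "AE \<omega> in M. \<forall>i\<in>{1..n}. 0 < X i \<omega>" by (intro AE_finite_allI X_pos) auto
  then show ?thesis
  proof (rule AE_mp, intro AE_I2 impI)
    fix \<omega> assume pos: "\<forall>i\<in>{1..n}. 0 < X i \<omega>"
    show "0 \<le> Y2 n k t X \<omega>"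
    proof (rule ccontr)
      let ?y = "Y2 n k t X \<omega>"
      assume neg: "\<not> 0 \<le> ?y"
      have "\<forall>i\<in>S. \<not> X i \<omega> \<le> ?y"
      proof
        fix i assume "i \<in> S"
        then have "0 < X i \<omega>" using pos by auto
        then show "\<not> X i \<omega> \<le> ?y" using neg by linarith
      qed
      then have emp: "{i \<in> S. X i \<omega> \<le> ?y} = {}" by blast
      have c: "card {i \<in> S. X i \<omega> \<le> ?y} < k" unfolding emp using k1 by simp
      have "?y < X t \<omega>"
      proof -
        have "0 < X t \<omega>" using pos tn by auto
        then show ?thesis using neg by linarith
      qed
      then have "?y < ?y" using c Y2_gt[OF k1 kn tn, of ?y X \<omega>] by blast
      then show False by simp
    qed
  qed
qed

lemma E_Xt: "expectation (X t) = s + 1 / l"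
proof -
  have "expectation (X t) = enn2real (\<integral>\<^sup>+\<omega>. ennreal (X t \<omega>) \<partial>M)"
    using tn X_pos[OF tn] by (intro integral_eq_nn_integral) (auto elim: AE_mp)
  also have "(\<integral>\<^sup>+\<omega>. ennreal (X t \<omega>) \<partial>M) = (\<integral>\<^sup>+y. emeasure M {\<omega>\<in>space M. y < X t \<omega>} * indicator {0..} y \<partial>lborel)"
    using tn by (intro nn_tail) auto
  also have "\<dots> = (\<integral>\<^sup>+y. ennreal (Gfun l s 0 1 y) * indicator {0..} y \<partial>lborel)"
  proof (intro nn_integral_cong)
    fix y :: real
    have "emeasure M {\<omega>\<in>space M. y < X t \<omega>} = ennreal (1 - F y)"
      using prob_gt[OF tn] by (simp add: emeasure_eq_measure)
    also have "1 - F y = Gfun l s 0 1 y" by (simp add: shifted_exp_cdf_def Gfun_def)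
    finally show "emeasure M {\<omega>\<in>space M. y < X t \<omega>} * indicator {0..} y = ennreal (Gfun l s 0 1 y) * indicator {0..} y" by simp
  qed
  also have "\<dots> = ennreal (s + real 1 / (l * real (Suc 0)))"
    by (rule Gfun_integral[OF l0 s0]) simp
  finally have E: "expectation (X t) = enn2real (ennreal (s + real 1 / (l * real (Suc 0))))" .
  have nn: "0 \<le> s + real 1 / (l * real (Suc 0))" using s0 l0 by simp
  show ?thesis using E enn2real_ennreal[OF nn] by simp
qed

lemma E_Y2: "expectation (Y2 n k t X) = s + real k / (l * real n)"
proof -
  have nS: "Suc (n - 1) = n" using n2 by simp
  have "expectation (Y2 n k t X) = enn2real (\<integral>\<^sup>+\<omega>. ennreal (Y2 n k t X \<omega>) \<partial>M)"
    using Y2_nonneg by (intro integral_eq_nn_integral) auto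
  also have "(\<integral>\<^sup>+\<omega>. ennreal (Y2 n k t X \<omega>) \<partial>M) = (\<integral>\<^sup>+y. emeasure M {\<omega>\<in>space M. y < Y2 n k t X \<omega>} * indicator {0..} y \<partial>lborel)"
    by (intro nn_tail) auto
  also have "\<dots> = (\<integral>\<^sup>+y. ennreal (Gfun l s (n-1) k y) * indicator {0..} y \<partial>lborel)"
  proof (intro nn_integral_cong)
    fix y :: real
    have "emeasure M {\<omega>\<in>space M. y < Y2 n k t X \<omega>} = ennreal (\<Sum>j<k. real ((n-1) choose j) * (F y ^ j * (1 - F y) ^ (n - j)))"
      using prob_Y2_gt by (simp add: emeasure_eq_measure)
    also have "(\<Sum>j<k. real ((n-1) choose j) * (F y ^ j * (1 - F y) ^ (n - j))) = Gfun l s (n-1) k y"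
    proof (cases "y < s")
      case True
      then have "(\<Sum>j<k. real ((n-1) choose j) * (F y ^ j * (1 - F y) ^ (n - j))) = (\<Sum>j<k. if j = 0 then 1 else 0)"
        by (intro sum.cong refl) (auto simp: shifted_exp_cdf_def)
      also have "\<dots> = 1" using k1 by (simp add: sum.delta)
      finally show ?thesis using True by (simp add: Gfun_def)
    next
      case False
      define e where "e = exp (-l*(y-s))"
      have Fy: "F y = 1 - e" using False by (simp add: shifted_exp_cdf_def e_def)
      have "(\<Sum>j<k. real ((n-1) choose j) * (F y ^ j * (1 - F y) ^ (n - j)))
          = (\<Sum>j<k. e * (real ((n-1) choose j) * (1 - e)^j * e^(n - 1 - j)))"
      proof (intro sum.cong refl)
        fix j assume "j \<in> {..<k}"
        then have "n - j = Suc (n - 1 - j)" using kn by auto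
        then show "real ((n-1) choose j) * (F y ^ j * (1 - F y) ^ (n - j)) = e * (real ((n-1) choose j) * (1 - e)^j * e^(n - 1 - j))"
          unfolding Fy by simp
      qed
      also have "\<dots> = Gfun l s (n-1) k y"
        using False by (simp add: Gfun_def e_def sum_distrib_left)
      finally show ?thesis .
    qed
    finally show "emeasure M {\<omega>\<in>space M. y < Y2 n k t X \<omega>} * indicator {0..} y = ennreal (Gfun l s (n-1) k y) * indicator {0..} y" by simp
  qed
  also have "\<dots> = ennreal (s + real k / (l * real (Suc (n-1))))"
    by (rule Gfun_integral[OF l0 s0]) (use kn nS in simp)
  finally have E: "expectation (Y2 n k t X) = enn2real (ennreal (s + real k / (l * real (Suc (n-1)))))" .
  have nn: "0 \<le> s + real k / (l * real (Suc (n-1)))" using s0 l0 by simp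
  show ?thesis using E enn2real_ennreal[OF nn] nS by simp
qed

end

theorem corollary7:
  fixes M :: "'a measure" and X :: "nat \<Rightarrow> 'a \<Rightarrow> real"
    and n k t :: nat and l s :: real
  assumes "prob_space M"
    and "n \<ge> 2" and "1 \<le> k" and "k \<le> n - 1"
    and "l > 0" and "s \<ge> 0" and "t \<in> {1..n}"
    and "prob_space.indep_vars M (\<lambda>_. borel) X {1..n}"
    and "\<And>i y. i \<in> {1..n} \<Longrightarrow>
           measure M {\<omega> \<in> space M. X i \<omega> \<le> y} = shifted_exp_cdf l s y"
  shows "(prob_space.expectation M (X t) - prob_space.expectation M (Y2 n k t X))
           / prob_space.expectation M (X t)
         = 1 / (s * l + 1) * ((real n - real k) / real n)"
proof -
  interpret cor7 M X n k t l s
    by (intro cor7.intro cor7_axioms.intro) (use assms in auto)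
  have n0: "real n > 0" using assms by simp
  have l0: "l > 0" "s * l + 1 > 0" using assms by (auto simp: add_nonneg_pos)
  have kn: "real k \<le> real n" using assms by simp
  have eq1: "s + 1/l = (s*l+1)/l" using l0 by (simp add: field_simps)
  have eq2: "s + 1/l - (s + real k/(l*real n)) = (real n - real k)/(l*real n)" using l0 n0 by (simp add: field_simps)
  have "(real n - real k)/(l*real n) / ((s*l+1)/l) = 1 / (s * l + 1) * ((real n - real k) / real n)"
    using l0 n0 by (simp add: divide_simps)
  then show ?thesis unfolding E_Xt E_Y2 eq2 by (simp only: eq1)
qed

end
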